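(* Let $n\ge 1$ and let $f\in\mathcal{G}_1$ be $n$-ary, $f=2x_1\cdots x_n\left(\sum_{i=1}^n a_ix_i^2+\sum_{i=1}^n b_ix_i+c\right)$, with $a_i\neq0$ for some $i$. Then $2u_n\in C(f)$, where $u_n=x_1\cdots x_n(x_1+1)$.
   Context: All operations are on $\mathbb{Z}_8$. $\mathcal{G}_1$ is the set of all operations (of any arity $n\ge1$) of the form $2x_1\cdots x_n\left(\sum_{i=1}^n a_ix_i^2+\sum_{i=1}^n b_ix_i+c\right)$ with $a_i,b_i\in\{0,1\}$ and $c\in\{0,1,2,3\}$. For an operation $f$, $C(f)$ denotes the clone generated by $f$ together with binary addition and all unary constant operations. *)

theory Defs
  imports "HOL-Library.Numeral_Type"
begin

text \<open>The ring Z_8 is the numeral type 8. A finitary operation on Z_8 is a pair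
(n, phi) with arity n \<ge> 1 and phi :: (nat \<Rightarrow> 8) \<Rightarrow> 8, normalised so that phi only
looks at the arguments 0..n-1 (argument x_i of the paper is x (i-1)).\<close>

type_synonym z8 = "8"
type_synonym operation = "nat \<times> ((nat \<Rightarrow> z8) \<Rightarrow> z8)"

definition canon :: "nat \<Rightarrow> ((nat \<Rightarrow> z8) \<Rightarrow> z8) \<Rightarrow> (nat \<Rightarrow> z8) \<Rightarrow> z8" where
  "canon n \<phi> = (\<lambda>x. \<phi> (\<lambda>i. if i < n then x i else 0))"

definition mk_op :: "nat \<Rightarrow> ((nat \<Rightarrow> z8) \<Rightarrow> z8) \<Rightarrow> operation" where
  "mk_op n \<phi> = (n, canon n \<phi>)"

inductive_set clone_gen :: "operation set \<Rightarrow> operation set" for F where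
  gen: "g \<in> F \<Longrightarrow> g \<in> clone_gen F"
| proj: "1 \<le> n \<Longrightarrow> i < n \<Longrightarrow> mk_op n (\<lambda>x. x i) \<in> clone_gen F"
| comp: "(k, g) \<in> clone_gen F \<Longrightarrow> 1 \<le> n \<Longrightarrow> (\<forall>j<k. (n, h j) \<in> clone_gen F)
         \<Longrightarrow> mk_op n (\<lambda>x. g (\<lambda>j. h j x)) \<in> clone_gen F"

definition C :: "operation \<Rightarrow> operation set" where
  "C f = clone_gen ({f, mk_op 2 (\<lambda>x. x 0 + x 1)} \<union> {mk_op 1 (\<lambda>x. c) | c. True})"

definition G1_op :: "nat \<Rightarrow> (nat \<Rightarrow> z8) \<Rightarrow> (nat \<Rightarrow> z8) \<Rightarrow> z8 \<Rightarrow> operation" where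
  "G1_op n a b c = mk_op n (\<lambda>x. 2 * (\<Prod>i<n. x i) *
      ((\<Sum>i<n. a i * (x i)^2) + (\<Sum>i<n. b i * x i) + c))"

definition u_op :: "nat \<Rightarrow> (nat \<Rightarrow> z8) \<Rightarrow> z8" where
  "u_op n = (\<lambda>x. (\<Prod>i<n. x i) * (x 0 + 1))"

end

theory Submission
  imports Defs
begin

lemma core:
  fixes t B :: "8"
  assumes "B = 0 \<or> B = 1"
  shows "2*(3*(t+1)*((t+1)^2+B*(t+1)) + 6*t*(t^2+B*t) + 5*(1+B) - t*(t^2 - B*t)) = 2*t*(t+1)"
proof (induct t rule: bit0.induct)
  case (1 z)
  then have "z \<in> {0,1,2,3,4,5,6,7}" by auto
  then show ?case using assms by (auto simp: algebra_simps)
qed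

lemma sixteen: "(16::8) = 0" by simp

lemma gen_alg:
  fixes t R K B :: "'a::comm_ring_1"
  shows "3*(2*(t+1)*R*((t+1)^2+B*(t+1)+K)) + 6*(2*t*R*(t^2+B*t+K)) + 5*(2*1*R*(1^2+B*1+K)) + 2*(-t)*R*((-t)^2+B*(-t)+K) =
     R*(2*(3*(t+1)*((t+1)^2+B*(t+1)) + 6*t*(t^2+B*t) + 5*(1+B) - t*(t^2 - B*t))) + 16*(K*R*(t+1))"
  by (simp add: power2_eq_square algebra_simps)

lemma final_alg:
  fixes t R K B :: "8"
  assumes "B = 0 \<or> B = 1"
  defines "G \<equiv> \<lambda>s. 2*s*R*(s^2+B*s+K)"
  shows "3*G(t+1) + 6*G t + 5*G 1 + G(-t) = 2*(t*R)*(t+1)"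
proof -
  have "3*G(t+1) + 6*G t + 5*G 1 + G(-t) =
     R*(2*(3*(t+1)*((t+1)^2+B*(t+1)) + 6*t*(t^2+B*t) + 5*(1+B) - t*(t^2 - B*t))) + 16*(K*R*(t+1))"
    unfolding G_def by (rule gen_alg)
  also have "\<dots> = 2*(t*R)*(t+1)" by (simp only: core[OF assms(1)] sixteen) (simp add: algebra_simps)
  finally show ?thesis .
qed

lemma comp':
  assumes "(k,g) \<in> clone_gen F" "1 \<le> n" "\<forall>j<k. mk_op n (h j) \<in> clone_gen F"
  shows "mk_op n (\<lambda>x. g (\<lambda>j. h j x)) \<in> clone_gen F"
proof -
  have "mk_op n (\<lambda>x. g (\<lambda>j. canon n (h j) x)) \<in> clone_gen F"
    using clone_gen.comp[of k g F n "\<lambda>j. canon n (h j)"] assms by (simp add: mk_op_def)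
  moreover have "mk_op n (\<lambda>x. g (\<lambda>j. canon n (h j) x)) = mk_op n (\<lambda>x. g (\<lambda>j. h j x))"
  proof -
    have "(\<lambda>i. if i < n then if i < n then x i else 0 else 0) = (\<lambda>i. if i<n then x i else (0::8))" for x
      by auto
    then show ?thesis by (simp add: mk_op_def canon_def)
  qed
  ultimately show ?thesis by simp
qed

lemma const_in:
  assumes "mk_op 1 (\<lambda>x. c) \<in> F" "1 \<le> n"
  shows "mk_op n (\<lambda>x. c) \<in> clone_gen F"
proof -
  have "(1, canon 1 (\<lambda>x. c)) \<in> clone_gen F" using assms clone_gen.gen by (metis mk_op_def)
  from comp'[OF this assms(2), of "\<lambda>j x. x 0"] assms(2)
  show ?thesis by (simp add: canon_def clone_gen.proj)
qed

lemma add_in: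
  assumes "mk_op 2 (\<lambda>x. x 0 + x 1) \<in> F" "1 \<le> n"
    and "mk_op n \<phi> \<in> clone_gen F" "mk_op n \<psi> \<in> clone_gen F"
  shows "mk_op n (\<lambda>x. \<phi> x + \<psi> x) \<in> clone_gen F"
proof -
  have g: "(2, canon 2 (\<lambda>x. x 0 + x 1)) \<in> clone_gen F" using assms(1) unfolding mk_op_def by (rule clone_gen.gen)
  have h: "\<forall>j<2. mk_op n ((\<lambda>j::nat. if j = 0 then \<phi> else \<psi>) j) \<in> clone_gen F"
  proof (intro allI impI)
    fix j :: nat assume "j < 2"
    show "mk_op n ((\<lambda>j. if j = 0 then \<phi> else \<psi>) j) \<in> clone_gen F"
    proof (cases "j = 0")
      case True then show ?thesis using assms(3) by simp
    next
      case False then show ?thesis using assms(4) by simp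
    qed
  qed
  have "mk_op n (\<lambda>x. canon 2 (\<lambda>x. x 0 + x 1) (\<lambda>j. (\<lambda>j. if j = 0 then \<phi> else \<psi>) j x)) \<in> clone_gen F"
    by (rule comp'[OF g assms(2) h])
  moreover have "(\<lambda>x. canon 2 (\<lambda>x. x 0 + x 1) (\<lambda>j. (\<lambda>j. if j = 0 then \<phi> else \<psi>) j x)) = (\<lambda>x. \<phi> x + \<psi> x)"
    by (simp add: canon_def)
  ultimately show ?thesis by (simp only:)
qed

lemma smul_in:
  assumes "mk_op 2 (\<lambda>x. x 0 + x 1) \<in> F" "mk_op 1 (\<lambda>x. 0) \<in> F" "1 \<le> n"
    and "mk_op n \<phi> \<in> clone_gen F"
  shows "mk_op n (\<lambda>x. of_nat m * \<phi> x) \<in> clone_gen F"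
proof (induct m)
  case 0
  then show ?case using const_in[OF assms(2,3)] by simp
next
  case (Suc m)
  from add_in[OF assms(1,3,4) Suc] show ?case by (simp add: algebra_simps)
qed


lemma canonF:
  "canon n (\<lambda>x. 2 * (\<Prod>i<n. x i) * ((\<Sum>i<n. a i * (x i)^2) + (\<Sum>i<n. b i * x i) + c))
   = (\<lambda>x. 2 * (\<Prod>i<n. x i) * ((\<Sum>i<n. a i * (x i)^2) + (\<Sum>i<n. b i * x i) + c))"
  unfolding canon_def
proof (intro ext)
  fix x :: "nat \<Rightarrow> 8"
  have 1: "(\<Prod>i<n. (\<lambda>i. if i < n then x i else 0) i) = (\<Prod>i<n. x i)" by (rule prod.cong) auto
  have 2: "(\<Sum>i<n. a i * ((\<lambda>i. if i < n then x i else 0) i)^2) = (\<Sum>i<n. a i * (x i)^2)" by (rule sum.cong) auto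
  have 3: "(\<Sum>i<n. b i * (\<lambda>i. if i < n then x i else 0) i) = (\<Sum>i<n. b i * x i)" by (rule sum.cong) auto
  show "2 * (\<Prod>i<n. (\<lambda>i. if i < n then x i else 0) i) * ((\<Sum>i<n. a i * ((\<lambda>i. if i < n then x i else 0) i)^2) + (\<Sum>i<n. b i * (\<lambda>i. if i < n then x i else 0) i) + c)
     = 2 * (\<Prod>i<n. x i) * ((\<Sum>i<n. a i * (x i)^2) + (\<Sum>i<n. b i * x i) + c)"
    unfolding 1 2 3 ..
qed

lemma decomp:
  fixes y :: "nat \<Rightarrow> 8"
  assumes "i0 < n"
  shows "2 * (\<Prod>i<n. y i) * ((\<Sum>i<n. a i * (y i)^2) + (\<Sum>i<n. b i * y i) + c)
    = 2 * y i0 * (\<Prod>i\<in>{..<n}-{i0}. y i) * (a i0 * (y i0)^2 + b i0 * y i0 +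
       ((\<Sum>i\<in>{..<n}-{i0}. a i * (y i)^2) + (\<Sum>i\<in>{..<n}-{i0}. b i * y i) + c))"
proof -
  have "i0 \<in> {..<n}" using assms by simp
  then have p: "(\<Prod>i<n. y i) = y i0 * (\<Prod>i\<in>{..<n}-{i0}. y i)"
    and s1: "(\<Sum>i<n. a i * (y i)^2) = a i0 * (y i0)^2 + (\<Sum>i\<in>{..<n}-{i0}. a i * (y i)^2)"
    and s2: "(\<Sum>i<n. b i * y i) = b i0 * y i0 + (\<Sum>i\<in>{..<n}-{i0}. b i * y i)"
    by (simp_all add: prod.remove sum.remove)
  show ?thesis unfolding p s1 s2 by (simp add: algebra_simps)
qed

theorem lemma4p3:
  fixes n :: nat and a b :: "nat \<Rightarrow> z8" and c :: z8
  assumes "n \<ge> 1"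
    and "\<forall>i<n. a i \<in> {0, 1}" and "\<forall>i<n. b i \<in> {0, 1}"
    and "c \<in> {0, 1, 2, 3}"
    and "\<exists>i<n. a i \<noteq> 0"
  shows "mk_op n (\<lambda>x. 2 * u_op n x) \<in> C (G1_op n a b c)"
proof -
  define F0 where "F0 = ({G1_op n a b c, mk_op 2 (\<lambda>x. x 0 + x 1)} \<union> {mk_op 1 (\<lambda>x. c) | c. True})"
  define Fp where "Fp = (\<lambda>x::nat\<Rightarrow>8. 2 * (\<Prod>i<n. x i) * ((\<Sum>i<n. a i * (x i)^2) + (\<Sum>i<n. b i * x i) + c))"
  have CS: "C (G1_op n a b c) = clone_gen F0" unfolding C_def F0_def ..
  have n1: "1 \<le> n" using assms(1) .
  have addF: "mk_op 2 (\<lambda>x. x 0 + x 1) \<in> F0" unfolding F0_def by simp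
  have constF: "mk_op 1 (\<lambda>x. d) \<in> F0" for d unfolding F0_def by blast
  have fF: "(n, Fp) \<in> clone_gen F0"
  proof -
    have "G1_op n a b c \<in> F0" unfolding F0_def by simp
    then have "(n, canon n Fp) \<in> clone_gen F0" unfolding G1_op_def mk_op_def Fp_def by (rule clone_gen.gen)
    then show ?thesis unfolding Fp_def canonF .
  qed
  obtain i0 where i0: "i0 < n" "a i0 \<noteq> 0" using assms(5) by blast
  have ai0: "a i0 = 1" using i0 assms(2) by auto
  define B where "B = b i0"
  have B01: "B = 0 \<or> B = 1" using i0 assms(3) unfolding B_def by auto
  define s where "s j = (if j = 0 then i0 else if j = i0 then 0 else j)" for j
  have ss: "s (s j) = j" for j unfolding s_def by auto
  have sn: "j < n \<Longrightarrow> s j < n" for j unfolding s_def using i0 by auto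
  define arg where "arg \<tau> x = (\<lambda>j. if j = i0 then \<tau> x else x (s j))" for \<tau> :: "(nat \<Rightarrow> 8) \<Rightarrow> 8" and x
  have Vin: "mk_op n (\<lambda>x. Fp (arg \<tau> x)) \<in> clone_gen F0" if "mk_op n \<tau> \<in> clone_gen F0" for \<tau>
  proof -
    have "\<forall>j<n. mk_op n (\<lambda>x. arg \<tau> x j) \<in> clone_gen F0"
    proof (intro allI impI)
      fix j assume "j < n"
      show "mk_op n (\<lambda>x. arg \<tau> x j) \<in> clone_gen F0"
      proof (cases "j = i0")
        case True then show ?thesis using that unfolding arg_def by simp
      next
        case False
        have "mk_op n (\<lambda>x. x (s j)) \<in> clone_gen F0" using clone_gen.proj[OF n1 sn[OF \<open>j < n\<close>]] .
        then show ?thesis using False unfolding arg_def by simp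
      qed
    qed
    from comp'[OF fF n1 this] show ?thesis by simp
  qed
  have p0: "mk_op n (\<lambda>x. x 0) \<in> clone_gen F0" using clone_gen.proj[OF n1] n1 by simp
  have t1: "mk_op n (\<lambda>x. x 0 + 1) \<in> clone_gen F0"
    using add_in[OF addF n1 p0 const_in[OF constF n1]] .
  have t3: "mk_op n (\<lambda>x. 1) \<in> clone_gen F0" using const_in[OF constF n1] .
  have t4: "mk_op n (\<lambda>x. - x 0) \<in> clone_gen F0"
  proof -
    have "mk_op n (\<lambda>x. of_nat 7 * x 0) \<in> clone_gen F0" using smul_in[OF addF constF n1 p0] .
    moreover have "(\<lambda>x. of_nat 7 * x 0) = (\<lambda>x::nat\<Rightarrow>8. - x 0)"
    proof
      fix x :: "nat \<Rightarrow> 8"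
      have h: "(of_nat 7 :: 8) = -1" by simp
      show "of_nat 7 * x 0 = - x 0" by (simp only: h) simp
    qed
    ultimately show ?thesis by (simp only:)
  qed
  define V where "V \<tau> x = Fp (arg \<tau> x)" for \<tau> x
  have sm: "mk_op n (\<lambda>x. of_nat m * V \<tau> x) \<in> clone_gen F0" if "mk_op n \<tau> \<in> clone_gen F0" for m \<tau>
    using smul_in[OF addF constF n1 Vin[OF that]] unfolding V_def .
  have W: "mk_op n (\<lambda>x. of_nat 3 * V (\<lambda>x. x 0 + 1) x + of_nat 6 * V (\<lambda>x. x 0) x
      + of_nat 5 * V (\<lambda>x. 1) x + of_nat 1 * V (\<lambda>x. - x 0) x) \<in> clone_gen F0"
    by (intro add_in[OF addF n1] sm t1 p0 t3 t4)
  define R where "R x = (\<Prod>i\<in>{..<n}-{i0}. x (s i))" for x :: "nat \<Rightarrow> 8"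
  define K where "K x = (\<Sum>i\<in>{..<n}-{i0}. a i * (x (s i))^2) + (\<Sum>i\<in>{..<n}-{i0}. b i * x (s i)) + c" for x :: "nat \<Rightarrow> 8"
  have Vf: "V \<tau> x = 2 * \<tau> x * R x * ((\<tau> x)^2 + B * \<tau> x + K x)" for \<tau> x
  proof -
    have e1: "(\<Prod>i\<in>{..<n}-{i0}. arg \<tau> x i) = R x" unfolding R_def arg_def by (rule prod.cong) auto
    have e2: "(\<Sum>i\<in>{..<n}-{i0}. a i * (arg \<tau> x i)^2) = (\<Sum>i\<in>{..<n}-{i0}. a i * (x (s i))^2)"
      unfolding arg_def by (rule sum.cong) auto
    have e3: "(\<Sum>i\<in>{..<n}-{i0}. b i * arg \<tau> x i) = (\<Sum>i\<in>{..<n}-{i0}. b i * x (s i))"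
      unfolding arg_def by (rule sum.cong) auto
    have "V \<tau> x = 2 * arg \<tau> x i0 * (\<Prod>i\<in>{..<n}-{i0}. arg \<tau> x i) * (a i0 * (arg \<tau> x i0)^2 + b i0 * arg \<tau> x i0 +
       ((\<Sum>i\<in>{..<n}-{i0}. a i * (arg \<tau> x i)^2) + (\<Sum>i\<in>{..<n}-{i0}. b i * arg \<tau> x i) + c))"
      unfolding V_def Fp_def by (rule decomp[OF i0(1)])
    also have "\<dots> = 2 * \<tau> x * R x * ((\<tau> x)^2 + B * \<tau> x + K x)"
      unfolding e1 e2 e3 K_def B_def ai0 by (simp add: arg_def algebra_simps)
    finally show ?thesis .
  qed
  have P: "(\<Prod>i<n. x i) = x 0 * R x" for x :: "nat \<Rightarrow> 8"
  proof -
    have inj: "inj_on s {..<n}" by (metis inj_onI ss)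
    have im: "s ` {..<n} = {..<n}"
    proof
      show "s ` {..<n} \<subseteq> {..<n}" using sn by auto
      show "{..<n} \<subseteq> s ` {..<n}" using sn ss by (metis image_eqI lessThan_iff subsetI)
    qed
    have "(\<Prod>i<n. x i) = (\<Prod>i\<in>s ` {..<n}. x i)" using im by simp
    also have "\<dots> = (\<Prod>i<n. x (s i))" using prod.reindex[OF inj, of x] by simp
    also have "\<dots> = x (s i0) * R x" unfolding R_def using i0(1) by (simp add: prod.remove)
    also have "s i0 = 0" unfolding s_def by simp
    finally show ?thesis .
  qed
  have eq: "(\<lambda>x. of_nat 3 * V (\<lambda>x. x 0 + 1) x + of_nat 6 * V (\<lambda>x. x 0) x
      + of_nat 5 * V (\<lambda>x. 1) x + of_nat 1 * V (\<lambda>x. - x 0) x) = (\<lambda>x. 2 * u_op n x)"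
  proof
    fix x :: "nat \<Rightarrow> 8"
    have "of_nat 3 * V (\<lambda>x. x 0 + 1) x + of_nat 6 * V (\<lambda>x. x 0) x
      + of_nat 5 * V (\<lambda>x. 1) x + of_nat 1 * V (\<lambda>x. - x 0) x
      = 3 * (2 * (x 0 + 1) * R x * ((x 0 + 1)^2 + B * (x 0 + 1) + K x))
        + 6 * (2 * x 0 * R x * ((x 0)^2 + B * x 0 + K x))
        + 5 * (2 * 1 * R x * (1^2 + B * 1 + K x))
        + (2 * (- x 0) * R x * ((- x 0)^2 + B * (- x 0) + K x))"
      unfolding Vf by simp
    also have "\<dots> = 2 * (x 0 * R x) * (x 0 + 1)"
      using final_alg[OF B01, of "x 0" "R x" "K x"] by simp
    also have "\<dots> = 2 * u_op n x" unfolding u_op_def P by (simp add: algebra_simps)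
    finally show "of_nat 3 * V (\<lambda>x. x 0 + 1) x + of_nat 6 * V (\<lambda>x. x 0) x
      + of_nat 5 * V (\<lambda>x. 1) x + of_nat 1 * V (\<lambda>x. - x 0) x = 2 * u_op n x" .
  qed
  show ?thesis using W unfolding eq CS .
qed

end
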